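(* For every NFA $\mathcal A$, the relation $S(\supseteq^{\mathrm{fw}},\subseteq^{\mathrm{fw}})$ is good for saturation, i.e. $\mathcal L(\mathrm{Sat}(\mathcal A,S(\supseteq^{\mathrm{fw}},\subseteq^{\mathrm{fw}})))=\mathcal L(\mathcal A)$.
   Context: An NFA $\mathcal A=(\Sigma,Q,I,F,\delta)$, $\delta\subseteq Q\times\Sigma\times Q$; its language is the set of finite words with a finite trace starting in $I$ and ending in $F$. Forward finite trace inclusion: $p\subseteq^{\mathrm{fw}}q$ iff for every finite word $w$, if some $w$-trace from $p$ ends in $F$ then some $w$-trace from $q$ ends in $F$; $\supseteq^{\mathrm{fw}}$ is its inverse. Let $\Delta=Q\times\Sigma\times Q$; $S(R_b,R_f)=\{((p,\sigma,r),(p',\sigma,r'))\in\Delta\times\Delta:p\,R_b\,p',\ r\,R_f\,r'\}$. For reflexive $S\subseteq\Delta\times\Delta$, $\mathrm{Sat}(\mathcal A,S)=(\Sigma,Q,I,F,\{t'\in\Delta:\exists t\in\delta,(t',t)\in S\})$. *)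

theory Defs
  imports Main
begin

record ('s, 'q) nfa =
  alph  :: "'s set"
  states :: "'q set"
  init  :: "'q set"
  final :: "'q set"
  trans :: "('q \<times> 's \<times> 'q) set"

definition wf_nfa :: "('s, 'q) nfa \<Rightarrow> bool" where
  "wf_nfa A \<longleftrightarrow> finite (alph A) \<and> finite (states A) \<and>
     init A \<subseteq> states A \<and> final A \<subseteq> states A \<and>
     trans A \<subseteq> states A \<times> alph A \<times> states A"

inductive run :: "('s, 'q) nfa \<Rightarrow> 'q \<Rightarrow> 's list \<Rightarrow> 'q \<Rightarrow> bool" for A where
  run_nil: "run A p [] p"
| run_cons: "(p, a, r) \<in> trans A \<Longrightarrow> run A r w q \<Longrightarrow> run A p (a # w) q"

definition lang :: "('s, 'q) nfa \<Rightarrow> 's list set" where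
  "lang A = {w. w \<in> lists (alph A) \<and> (\<exists>i\<in>init A. \<exists>f\<in>final A. run A i w f)}"

definition fw_incl :: "('s, 'q) nfa \<Rightarrow> 'q rel" where
  "fw_incl A = {(p, q). p \<in> states A \<and> q \<in> states A \<and>
     (\<forall>w \<in> lists (alph A). (\<exists>f\<in>final A. run A p w f) \<longrightarrow> (\<exists>f\<in>final A. run A q w f))}"

definition Delta :: "('s, 'q) nfa \<Rightarrow> ('q \<times> 's \<times> 'q) set" where
  "Delta A = states A \<times> alph A \<times> states A"

definition S_rel :: "('s, 'q) nfa \<Rightarrow> 'q rel \<Rightarrow> 'q rel \<Rightarrow> (('q \<times> 's \<times> 'q) \<times> ('q \<times> 's \<times> 'q)) set" where
  "S_rel A Rb Rf = {((p, a, r), (p', a', r')).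
      (p, a, r) \<in> Delta A \<and> (p', a', r') \<in> Delta A \<and> a = a' \<and> (p, p') \<in> Rb \<and> (r, r') \<in> Rf}"

definition Sat :: "('s, 'q) nfa \<Rightarrow> (('q \<times> 's \<times> 'q) \<times> ('q \<times> 's \<times> 'q)) set \<Rightarrow> ('s, 'q) nfa" where
  "Sat A S = A\<lparr> trans := {t' \<in> Delta A. \<exists>t \<in> trans A. (t', t) \<in> S} \<rparr>"

end

theory Submission
  imports Defs
begin

lemma sat_trans:
  "trans (Sat A S) = {t' \<in> Delta A. \<exists>t \<in> trans A. (t', t) \<in> S}"
  by (simp add: Sat_def)

lemma sat_other[simp]: "init (Sat A S) = init A" "final (Sat A S) = final A" "alph (Sat A S) = alph A"
  by (simp_all add: Sat_def)

lemma sat_back: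
  assumes "run (Sat A (S_rel A ((fw_incl A)\<inverse>) (fw_incl A))) p w f"
    and "f \<in> final A" and "w \<in> lists (alph A)"
  shows "\<exists>f'\<in>final A. run A p w f'"
  using assms
proof (induction rule: run.induct)
  case (run_nil p)
  then show ?case by (auto intro: run.run_nil)
next
  case (run_cons p a r w q)
  then obtain p' a' r' where t: "(p',a',r') \<in> trans A"
    and s: "((p,a,r),(p',a',r')) \<in> S_rel A ((fw_incl A)\<inverse>) (fw_incl A)"
    by (auto simp: sat_trans)
  from s have a: "a' = a" and pp: "(p',p) \<in> fw_incl A" and rr: "(r,r') \<in> fw_incl A"
    by (auto simp: S_rel_def)
  from run_cons.prems(2) have w: "w \<in> lists (alph A)" and aa: "a \<in> alph A" by auto
  from run_cons.IH[OF run_cons.prems(1) w] obtain f1 where "f1 \<in> final A" "run A r w f1" by blast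
  moreover from rr have "\<forall>w \<in> lists (alph A). (\<exists>f\<in>final A. run A r w f) \<longrightarrow> (\<exists>f\<in>final A. run A r' w f)"
    unfolding fw_incl_def by blast
  ultimately obtain f2 where f2: "f2 \<in> final A" "run A r' w f2" using w by blast
  have "run A p' (a#w) f2" using t a f2 by (auto intro: run.run_cons)
  moreover have "a # w \<in> lists (alph A)" using w aa by auto
  ultimately have "\<exists>f\<in>final A. run A p' (a#w) f" "a # w \<in> lists (alph A)" using f2(1) by auto
  moreover from pp have "\<forall>w \<in> lists (alph A). (\<exists>f\<in>final A. run A p' w f) \<longrightarrow> (\<exists>f\<in>final A. run A p w f)"
    unfolding fw_incl_def by blast
  ultimately show ?case by blast
qed

lemma sat_fwd:
  assumes wf: "wf_nfa A" and "run A p w f"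
  shows "run (Sat A (S_rel A ((fw_incl A)\<inverse>) (fw_incl A))) p w f"
  using assms(2)
proof (induction rule: run.induct)
  case (run_nil p)
  then show ?case by (rule run.run_nil)
next
  case (run_cons p a r w q)
  have d: "(p,a,r) \<in> Delta A" using run_cons.hyps(1) wf by (auto simp: wf_nfa_def Delta_def)
  hence "(p,p) \<in> fw_incl A" "(r,r) \<in> fw_incl A" by (auto simp: fw_incl_def Delta_def)
  hence "(p,a,r) \<in> trans (Sat A (S_rel A ((fw_incl A)\<inverse>) (fw_incl A)))"
    using d run_cons.hyps(1) by (auto simp: sat_trans S_rel_def)
  then show ?case using run_cons.IH by (rule run.run_cons)
qed

theorem theorem10p7:
  fixes A :: "('s, 'q) nfa"
  assumes "wf_nfa A"
  shows "lang (Sat A (S_rel A ((fw_incl A)\<inverse>) (fw_incl A))) = lang A"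
proof (rule set_eqI, rule iffI)
  fix w assume "w \<in> lang (Sat A (S_rel A ((fw_incl A)\<inverse>) (fw_incl A)))"
  hence w: "w \<in> lists (alph A)" and "\<exists>i\<in>init A. \<exists>f\<in>final A. run (Sat A (S_rel A ((fw_incl A)\<inverse>) (fw_incl A))) i w f"
    unfolding lang_def sat_other by simp_all
  then obtain i f where i: "i \<in> init A" and f: "f \<in> final A"
    and r: "run (Sat A (S_rel A ((fw_incl A)\<inverse>) (fw_incl A))) i w f"
    by blast
  obtain f' where "f' \<in> final A" "run A i w f'" using sat_back[OF r f w] by blast
  hence "\<exists>i\<in>init A. \<exists>f\<in>final A. run A i w f" using i by blast
  thus "w \<in> lang A" using w unfolding lang_def by simp
next
  fix w assume "w \<in> lang A"
  hence w: "w \<in> lists (alph A)" and "\<exists>i\<in>init A. \<exists>f\<in>final A. run A i w f"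
    unfolding lang_def by simp_all
  then obtain i f where i: "i \<in> init A" and f: "f \<in> final A" and r: "run A i w f"
    by blast
  have "run (Sat A (S_rel A ((fw_incl A)\<inverse>) (fw_incl A))) i w f" using sat_fwd[OF assms r] .
  hence "\<exists>i\<in>init A. \<exists>f\<in>final A. run (Sat A (S_rel A ((fw_incl A)\<inverse>) (fw_incl A))) i w f"
    using i f by blast
  thus "w \<in> lang (Sat A (S_rel A ((fw_incl A)\<inverse>) (fw_incl A)))"
    using w unfolding lang_def sat_other by simp
qed

end
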